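(* Let $K$ be a valued field, $d\ge1$, and $C\subseteq K^d$ convex. Then $C$ is an open subset of its affine span $\operatorname{aff}(C)$ (with the subspace topology induced by the valuation topology on $K^d$). Consequently, every convex subset of $K^d$ is closed in $K^d$.
   Context: $K$ is a field with a valuation $\nu:K\to\Gamma\cup\{\infty\}$, valuation ring $\mathcal{O}$. A set $X\subseteq K^d$ is convex if it is closed under combinations $\sum_{i=1}^n\alpha_ix_i$ with $x_i\in X$, $\alpha_i\in\mathcal{O}$, $\sum\alpha_i=1$. On $K^d$ put $\nu(x_1,\dots,x_d)=\min_i\nu(x_i)$; the valuation topology on $K^d$ has as basis the balls $\{x:\nu(x-c)>r\}$ ($c\in K^d$, $r\in\Gamma$), equivalently it is the product topology of the valuation topology on $K$. The affine span $\operatorname{aff}(X)$ is $\{\sum_{i=1}^n\alpha_ix_i: x_i\in X,\alpha_i\in K,\sum\alpha_i=1\}$. *)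

theory Defs
  imports "HOL-Analysis.Analysis"
begin

text \<open>The value nu(0) = infinity is left implicit: v is only constrained on nonzero
  elements, and "nu(x) > r" is rendered as "x = 0 \<or> v x > r".\<close>
definition valuation :: "('k::field \<Rightarrow> 'g::linordered_ab_group_add) \<Rightarrow> bool" where
  "valuation v \<longleftrightarrow>
     (\<forall>x y. x \<noteq> 0 \<longrightarrow> y \<noteq> 0 \<longrightarrow> v (x * y) = v x + v y) \<and>
     (\<forall>x y. x \<noteq> 0 \<longrightarrow> y \<noteq> 0 \<longrightarrow> x + y \<noteq> 0 \<longrightarrow> min (v x) (v y) \<le> v (x + y))"

definition val_ring :: "('k::field \<Rightarrow> 'g::linordered_ab_group_add) \<Rightarrow> 'k set" where
  "val_ring v = {a. a = 0 \<or> 0 \<le> v a}"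

definition smul :: "'k::times \<Rightarrow> 'k^'n \<Rightarrow> 'k^'n" where
  "smul a x = (\<chi> i. a * x $ i)"

definition val_convex :: "('k::field \<Rightarrow> 'g::linordered_ab_group_add) \<Rightarrow> ('k^'n) set \<Rightarrow> bool" where
  "val_convex v X \<longleftrightarrow>
     (\<forall>(m::nat) (x::nat \<Rightarrow> 'k^'n) (\<alpha>::nat \<Rightarrow> 'k).
        (\<forall>i<m. x i \<in> X) \<and> (\<forall>i<m. \<alpha> i \<in> val_ring v) \<and> (\<Sum>i<m. \<alpha> i) = 1
        \<longrightarrow> (\<Sum>i<m. smul (\<alpha> i) (x i)) \<in> X)"

definition aff :: "('k::field^'n) set \<Rightarrow> ('k^'n) set" where
  "aff X = {y. \<exists>(m::nat) (x::nat \<Rightarrow> 'k^'n) (\<alpha>::nat \<Rightarrow> 'k).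
              (\<forall>i<m. x i \<in> X) \<and> (\<Sum>i<m. \<alpha> i) = 1 \<and> y = (\<Sum>i<m. smul (\<alpha> i) (x i))}"

text \<open>Open ball {x. nu(x - c) > r}, with nu(x) = min_i nu(x_i).\<close>
definition vball :: "('k::field \<Rightarrow> 'g::linordered_ab_group_add) \<Rightarrow> 'k^'n \<Rightarrow> 'g \<Rightarrow> ('k^'n) set" where
  "vball v c r = {x. \<forall>i. x $ i - c $ i = 0 \<or> r < v (x $ i - c $ i)}"

definition val_topology :: "('k::field \<Rightarrow> 'g::linordered_ab_group_add) \<Rightarrow> ('k^'n) topology" where
  "val_topology v = topology (\<lambda>U. \<forall>c\<in>U. \<exists>r. vball v c r \<subseteq> U)"

end

theory Submission
  imports Defs
begin

section \<open>Valuation basics\<close>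

lemma vmult: "valuation v \<Longrightarrow> x \<noteq> 0 \<Longrightarrow> y \<noteq> 0 \<Longrightarrow> v (x * y) = v x + v y"
  unfolding valuation_def by blast

lemma vadd: "valuation v \<Longrightarrow> x \<noteq> 0 \<Longrightarrow> y \<noteq> 0 \<Longrightarrow> x + y \<noteq> 0 \<Longrightarrow> min (v x) (v y) \<le> v (x + y)"
  unfolding valuation_def by blast

lemma dbl0: "(x::'g::linordered_ab_group_add) + x = 0 \<Longrightarrow> x = 0"
proof (rule ccontr)
  assume a: "x + x = 0" "x \<noteq> 0"
  show False
  proof (cases "x > 0")
    case True then have "x + x > 0" by (simp add: add_pos_pos)
    with a show False by simp
  next
    case False then have "x < 0" using a by auto
    then have "x + x < 0" by (simp add: add_neg_neg)
    with a show False by simp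
  qed
qed

lemma v1: "valuation v \<Longrightarrow> v 1 = 0"
  using vmult[of v 1 1] by simp

lemma vm1: "valuation v \<Longrightarrow> v (-1) = 0"
proof -
  assume a: "valuation v"
  have "v ((-1) * (-1)) = v (-1) + v (-1)" using vmult[OF a, of "-1" "-1"] by simp
  then have "v (-1) + v (-1) = 0" using v1[OF a] by simp
  then show ?thesis by (rule dbl0)
qed

lemma vneg: "valuation v \<Longrightarrow> v (- x) = v x"
proof (cases "x = 0")
  case False
  assume a: "valuation v"
  have "v ((-1) * x) = v (-1) + v x" using vmult[OF a, of "-1" x] False by simp
  then show ?thesis using vm1[OF a] by simp
qed simp

lemma vinv: "valuation v \<Longrightarrow> x \<noteq> 0 \<Longrightarrow> v (inverse x) = - v x"
proof -
  assume a: "valuation v" "x \<noteq> 0"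
  have "v (x * inverse x) = v x + v (inverse x)" using vmult[OF a(1), of x "inverse x"] a by simp
  then have "v x + v (inverse x) = 0" using v1[OF a(1)] a(2) by simp
  then show ?thesis by (simp add: add.commute eq_neg_iff_add_eq_0)
qed

lemma vdiv: "valuation v \<Longrightarrow> x \<noteq> 0 \<Longrightarrow> y \<noteq> 0 \<Longrightarrow> v (x / y) = v x - v y"
  using vmult[of v x "inverse y"] vinv[of v y] by (simp add: divide_inverse)

lemma ultra: "valuation v \<Longrightarrow> (x = 0 \<or> r < v x) \<Longrightarrow> (y = 0 \<or> r < v y) \<Longrightarrow> (x + y = 0 \<or> r < v (x + y))"
proof -
  assume a: "valuation v" "x = 0 \<or> r < v x" "y = 0 \<or> r < v y"
  show ?thesis
  proof (cases "x = 0 \<or> y = 0 \<or> x + y = 0")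
    case True then show ?thesis using a by auto
  next
    case False
    then have "min (v x) (v y) \<le> v (x + y)" using vadd[OF a(1)] by blast
    moreover have "r < min (v x) (v y)" using a False by auto
    ultimately show ?thesis using order_less_le_trans by blast
  qed
qed

lemma ultra_diff: "valuation v \<Longrightarrow> (x = 0 \<or> r < v x) \<Longrightarrow> (y = 0 \<or> r < v y) \<Longrightarrow> (x - y = 0 \<or> r < v (x - y))"
  using ultra[of v x r "- y"] vneg[of v y] by auto

lemma O0: "0 \<in> val_ring v" by (simp add: val_ring_def)
lemma O1: "valuation v \<Longrightarrow> 1 \<in> val_ring v" by (simp add: val_ring_def v1)
lemma Om1: "valuation v \<Longrightarrow> -1 \<in> val_ring v" by (simp add: val_ring_def vm1)
lemma Oneg: "valuation v \<Longrightarrow> a \<in> val_ring v \<Longrightarrow> - a \<in> val_ring v" by (simp add: val_ring_def vneg)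
lemma ultra_le: "valuation v \<Longrightarrow> (x = 0 \<or> r \<le> v x) \<Longrightarrow> (y = 0 \<or> r \<le> v y) \<Longrightarrow> (x + y = 0 \<or> r \<le> v (x + y))"
proof -
  assume a: "valuation v" "x = 0 \<or> r \<le> v x" "y = 0 \<or> r \<le> v y"
  show ?thesis
  proof (cases "x = 0 \<or> y = 0 \<or> x + y = 0")
    case True then show ?thesis using a by auto
  next
    case False
    then have "min (v x) (v y) \<le> v (x + y)" using vadd[OF a(1)] by blast
    moreover have "r \<le> min (v x) (v y)" using a False by auto
    ultimately show ?thesis using order_trans by blast
  qed
qed

lemma Oadd: "valuation v \<Longrightarrow> a \<in> val_ring v \<Longrightarrow> b \<in> val_ring v \<Longrightarrow> a + b \<in> val_ring v"
  unfolding val_ring_def using ultra_le[of v a 0 b] by auto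

lemma Omult: "valuation v \<Longrightarrow> a \<in> val_ring v \<Longrightarrow> b \<in> val_ring v \<Longrightarrow> a * b \<in> val_ring v"
proof (cases "a = 0 \<or> b = 0")
  case False
  assume "valuation v" "a \<in> val_ring v" "b \<in> val_ring v"
  then show ?thesis using False vmult[of v a b] by (simp add: val_ring_def add_nonneg_nonneg)
qed (auto simp: val_ring_def)

lemma Odiff: "valuation v \<Longrightarrow> a \<in> val_ring v \<Longrightarrow> b \<in> val_ring v \<Longrightarrow> a - b \<in> val_ring v"
  using Oadd[of v a "-b"] Oneg[of v b] by simp


lemma ar1: "(r'::'g::linordered_ab_group_add) + t - u \<le> r \<Longrightarrow> r - t < b \<Longrightarrow> u \<le> m \<Longrightarrow> r' < b + m"
  by (metis (mono_tags, lifting) add_less_imp_less_right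
    add_mono_thms_linordered_semiring(2) diff_add_eq diff_less_eq
    order_le_less order_le_less_trans)

lemma smul_nth[simp]: "smul a x $ i = a * x $ i" by (simp add: smul_def)
lemma smul_0[simp]: "smul 0 (x::'k::field^'n) = 0" by (simp add: vec_eq_iff)
lemma smul_1[simp]: "smul 1 x = (x::'k::field^'n)" by (simp add: vec_eq_iff)
lemma smul_0r[simp]: "smul a (0::'k::field^'n) = 0" by (simp add: vec_eq_iff)
lemma smul_addr: "smul a (x + y) = smul a x + smul a (y::'k::field^'n)" by (simp add: vec_eq_iff algebra_simps)
lemma smul_addl: "smul (a + b) x = smul a x + smul b (x::'k::field^'n)" by (simp add: vec_eq_iff algebra_simps)
lemma smul_diffr: "smul a (x - y) = smul a x - smul a (y::'k::field^'n)" by (simp add: vec_eq_iff algebra_simps)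
lemma smul_assoc: "smul a (smul b x) = smul (a * b) (x::'k::field^'n)" by (simp add: vec_eq_iff algebra_simps)
lemma smul_m1: "smul (-1) x = - (x::'k::field^'n)" by (simp add: vec_eq_iff)
lemma smul_neg: "smul (-a) x = - smul a (x::'k::field^'n)" by (simp add: vec_eq_iff)

definition sm :: "('k::field \<Rightarrow> 'g::linordered_ab_group_add) \<Rightarrow> 'g \<Rightarrow> 'k^'n \<Rightarrow> bool" where
  "sm v r y \<longleftrightarrow> (\<forall>i. y $ i = 0 \<or> r < v (y $ i))"

definition Omod :: "('k::field \<Rightarrow> 'g::linordered_ab_group_add) \<Rightarrow> ('k^'n) set \<Rightarrow> bool" where
  "Omod v M \<longleftrightarrow> 0 \<in> M \<and> (\<forall>x\<in>M. \<forall>y\<in>M. x + y \<in> M) \<and> (\<forall>a\<in>val_ring v. \<forall>x\<in>M. smul a x \<in> M)"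

lemma Omod_0: "Omod v M \<Longrightarrow> 0 \<in> M" by (simp add: Omod_def)
lemma Omod_add: "Omod v M \<Longrightarrow> x \<in> M \<Longrightarrow> y \<in> M \<Longrightarrow> x + y \<in> M" by (simp add: Omod_def)
lemma Omod_smul: "Omod v M \<Longrightarrow> a \<in> val_ring v \<Longrightarrow> x \<in> M \<Longrightarrow> smul a x \<in> M" by (simp add: Omod_def)
lemma Omod_neg: "valuation v \<Longrightarrow> Omod v M \<Longrightarrow> x \<in> M \<Longrightarrow> - x \<in> M"
  using Omod_smul[of v M "-1" x] Om1[of v] by (simp add: smul_m1)
lemma Omod_diff: "valuation v \<Longrightarrow> Omod v M \<Longrightarrow> x \<in> M \<Longrightarrow> y \<in> M \<Longrightarrow> x - y \<in> M"
  using Omod_add[of v M x "- y"] Omod_neg[of v M y] by simp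

lemma two_term:
  assumes val: "valuation v" and M: "Omod v M" and m: "m \<in> M" "m' \<in> M"
  shows "\<exists>c w. w \<in> M \<and> smul a m + smul b m' = smul c w"
proof (cases "a = 0 \<or> b = 0")
  case True then show ?thesis using m by (metis add.right_neutral add_0 smul_0)
next
  case False
  show ?thesis
  proof (cases "v a \<le> v b")
    case True
    have "b / a \<in> val_ring v" using vdiv[OF val, of b a] False True by (simp add: val_ring_def)
    then have "m + smul (b / a) m' \<in> M" using M m by (simp add: Omod_add Omod_smul)
    moreover have "smul a m + smul b m' = smul a (m + smul (b / a) m')"
      using False by (simp add: smul_addr smul_assoc)
    ultimately show ?thesis by blast
  next
    case nle: False
    have "a / b \<in> val_ring v" using vdiv[OF val, of a b] False nle by (simp add: val_ring_def)
    then have "smul (a / b) m + m' \<in> M" using M m by (simp add: Omod_add Omod_smul)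
    moreover have "smul a m + smul b m' = smul b (smul (a / b) m + m')"
      using False by (simp add: smul_addr smul_assoc)
    ultimately show ?thesis by blast
  qed
qed

lemma finite_lb: "\<exists>\<mu>::'g::linorder. \<forall>i::'n::finite. P i \<longrightarrow> \<mu> \<le> f i"
proof (cases "{i. P i} = {}")
  case True then show ?thesis by auto
next
  case False
  then show ?thesis by (intro exI[of _ "Min (f ` {i. P i})"]) auto
qed

lemma sm_mono: "sm v r y \<Longrightarrow> r' \<le> r \<Longrightarrow> sm v r' y"
  unfolding sm_def using order_le_less_trans by blast


lemma keyP:
  fixes v :: "'k::field \<Rightarrow> 'g::linordered_ab_group_add" and M :: "('k^'n) set"
  assumes val: "valuation v" and fin: "finite S"
  shows "Omod v M \<Longrightarrow> (\<forall>m\<in>M. \<forall>i. i \<notin> S \<longrightarrow> m $ i = 0) \<Longrightarrow>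
    \<exists>r. \<forall>a m. m \<in> M \<longrightarrow> sm v r (smul a m) \<longrightarrow> smul a m \<in> M"
  using fin
proof (induction S arbitrary: M rule: finite_induct)
  case empty
  then have "\<forall>m\<in>M. m = 0" by (simp add: vec_eq_iff)
  then show ?case using Omod_0[OF empty(1)] by (intro exI[of _ 0]) auto
next
  case (insert j S M)
  show ?case
  proof (cases "\<forall>m\<in>M. m $ j = 0")
    case True
    have "\<forall>m\<in>M. \<forall>i. i \<notin> S \<longrightarrow> m $ i = 0" 
    proof (intro ballI allI impI)
      fix m i assume "m \<in> M" "i \<notin> S"
      then show "m $ i = 0" using True insert.prems(2) by (cases "i = j") auto
    qed
    then show ?thesis using insert.IH[OF insert.prems(1)] by blast
  next
    case False
    then obtain m0 where m0: "m0 \<in> M" "m0 $ j \<noteq> 0" by blast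
    define t where "t = m0 $ j"
    define M' where "M' = {m \<in> M. m $ j = 0}"
    have MM: "Omod v M" by (rule insert.prems(1))
    have M'mod: "Omod v M'"
      using MM unfolding M'_def Omod_def by auto
    have M'van: "\<forall>m\<in>M'. \<forall>i. i \<notin> S \<longrightarrow> m $ i = 0"
      using insert.prems(2) unfolding M'_def by auto
    obtain r' where r': "\<forall>a m. m \<in> M' \<longrightarrow> sm v r' (smul a m) \<longrightarrow> smul a m \<in> M'"
      using insert.IH[OF M'mod M'van] by blast
    obtain \<mu> where mu: "\<forall>i. m0 $ i \<noteq> 0 \<longrightarrow> \<mu> \<le> v (m0 $ i)"
      using finite_lb[of "\<lambda>i. m0 $ i \<noteq> 0" "\<lambda>i. v (m0 $ i)"] by blast
    define r where "r = max r' (max (v t) (r' + v t - \<mu>))"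
    have rr': "r' \<le> r" and rt: "v t \<le> r" and rmu: "r' + v t - \<mu> \<le> r" unfolding r_def by (auto simp: le_max_iff_disj)
    show ?thesis
    proof (intro exI allI impI)
      fix a m assume m: "m \<in> M" and smy: "sm v r (smul a m)"
      define y where "y = smul a m"
      define s where "s = y $ j"
      show "smul a m \<in> M"
      proof (cases "s = 0")
        case True
        show ?thesis
        proof (cases "a = 0")
          case True then show ?thesis using Omod_0[OF MM] by simp
        next
          case False
          then have "m \<in> M'" using \<open>s = 0\<close> m unfolding s_def y_def M'_def by simp
          then have "smul a m \<in> M'" using r'[rule_format, OF _ sm_mono[OF smy rr']] by blast
          then show ?thesis unfolding M'_def by blast
        qed
      next
        case False
        have vs: "r < v s" using smy False unfolding sm_def s_def y_def by blast
        define b where "b = s / t"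
        have tnz: "t \<noteq> 0" using m0 t_def by simp
        have vb: "v b = v s - v t" unfolding b_def using vdiv[OF val] False tnz by simp
        have vb2: "r - v t < v b" unfolding vb using vs by (simp add: diff_strict_right_mono)
        have "0 \<le> v b" unfolding vb using vs rt by simp
        then have bO: "b \<in> val_ring v" by (simp add: val_ring_def)
        have bm0: "smul b m0 \<in> M" using Omod_smul[OF MM bO m0(1)] .
        obtain c w where w: "w \<in> M" and cw: "smul a m + smul (-b) m0 = smul c w"
          using two_term[OF val MM m m0(1)] by blast
        define z where "z = smul c w"
        have zy: "z = y - smul b m0" unfolding z_def y_def cw[symmetric] by (simp add: smul_neg)
        have zj: "z $ j = 0" unfolding zy using tnz by (simp add: s_def[symmetric] b_def t_def[symmetric])
        have "z \<in> M"
        proof (cases "c = 0")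
          case True then show ?thesis unfolding z_def using Omod_0[OF MM] by simp
        next
          case False
          then have wM': "w \<in> M'" using zj w unfolding z_def M'_def by simp
          have "sm v r' z" unfolding sm_def
          proof
            fix i
            have "y $ i = 0 \<or> r < v (y $ i)"
              using smy unfolding sm_def y_def by blast
            then have y1: "y $ i = 0 \<or> r' < v (y $ i)"
              using rr' by (auto intro: order_le_less_trans)
            have y2: "b * m0 $ i = 0 \<or> r' < v (b * m0 $ i)"
            proof (cases "b = 0 \<or> m0 $ i = 0")
              case False
              then have "v (b * m0 $ i) = v b + v (m0 $ i)" using vmult[OF val] by blast
              moreover have "\<mu> \<le> v (m0 $ i)" using mu False by blast
              ultimately show ?thesis using ar1[OF rmu vb2] by simp
            qed auto
            show "z $ i = 0 \<or> r' < v (z $ i)"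
              using ultra_diff[OF val y1 y2] unfolding zy by simp
          qed
          then have "smul c w \<in> M'" using r'[rule_format, OF wM'] unfolding z_def by blast
          then show ?thesis unfolding z_def M'_def by blast
        qed
        then have "z + smul b m0 \<in> M" using Omod_add[OF MM _ bm0] by blast
        then show ?thesis unfolding zy y_def by simp
      qed
    qed
  qed
qed



section \<open>Topology\<close>

lemma vball_mono: "r1 \<le> r2 \<Longrightarrow> vball v c r2 \<subseteq> vball v c r1"
  unfolding vball_def using order_le_less_trans by blast

lemma istop_val: "istopology (\<lambda>U. \<forall>c\<in>U. \<exists>r. vball v (c::'k::field^'n) r \<subseteq> U)"
  unfolding istopology_def
proof (intro conjI allI impI)
  fix S T :: "('k^'n) set"
  assume S: "\<forall>c\<in>S. \<exists>r. vball v c r \<subseteq> S" and T: "\<forall>c\<in>T. \<exists>r. vball v c r \<subseteq> T"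
  show "\<forall>c\<in>S \<inter> T. \<exists>r. vball v c r \<subseteq> S \<inter> T"
  proof
    fix c assume "c \<in> S \<inter> T"
    then obtain r1 r2 where "vball v c r1 \<subseteq> S" "vball v c r2 \<subseteq> T" using S T by blast
    moreover have "vball v c (max r1 r2) \<subseteq> vball v c r1" "vball v c (max r1 r2) \<subseteq> vball v c r2"
      using vball_mono[of r1 "max r1 r2" v c] vball_mono[of r2 "max r1 r2" v c] by auto
    ultimately show "\<exists>r. vball v c r \<subseteq> S \<inter> T" by blast
  qed
next
  fix K :: "('k^'n) set set"
  assume "\<forall>S\<in>K. \<forall>c\<in>S. \<exists>r. vball v c r \<subseteq> S"
  then show "\<forall>c\<in>\<Union>K. \<exists>r. vball v c r \<subseteq> \<Union>K"
  proof (intro ballI)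
    fix c assume H: "\<forall>S\<in>K. \<forall>c\<in>S. \<exists>r. vball v c r \<subseteq> S" and "c \<in> \<Union>K"
    then obtain S where S: "S \<in> K" "c \<in> S" by blast
    then obtain r where "vball v c r \<subseteq> S" using H by blast
    then have "vball v c r \<subseteq> \<Union>K" using S by blast
    then show "\<exists>r. vball v c r \<subseteq> \<Union>K" ..
  qed
qed

lemma openin_val: "openin (val_topology v) U \<longleftrightarrow> (\<forall>c\<in>U. \<exists>r. vball v c r \<subseteq> U)"
  unfolding val_topology_def by (simp add: topology_inverse'[OF istop_val])

lemma topspace_val: "topspace (val_topology v) = UNIV"
proof -
  have "openin (val_topology v) UNIV" unfolding openin_val by blast
  then show ?thesis using openin_subset by blast
qed

lemma vball_sm: "x \<in> vball v c r \<longleftrightarrow> sm v r (x - c)"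
  by (simp add: vball_def sm_def)

lemma vball_open: assumes val: "valuation v" shows "openin (val_topology v) (vball v c r)"
  unfolding openin_val
proof
  fix x assume x: "x \<in> vball v c r"
  have "vball v x r \<subseteq> vball v c r"
  proof
    fix y assume y: "y \<in> vball v x r"
    show "y \<in> vball v c r" unfolding vball_def mem_Collect_eq
    proof
      fix i
      have "(y $ i - x $ i) + (x $ i - c $ i) = 0 \<or> r < v ((y $ i - x $ i) + (x $ i - c $ i))"
        using ultra[OF val, of "y $ i - x $ i" r "x $ i - c $ i"] x y unfolding vball_def by blast
      then show "y $ i - c $ i = 0 \<or> r < v (y $ i - c $ i)" by simp
    qed
  qed
  then show "\<exists>r'. vball v x r' \<subseteq> vball v c r" by blast
qed

lemma vball_center: "c \<in> vball v c r" by (simp add: vball_def)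

section \<open>Convexity\<close>

lemma convex2:
  assumes "val_convex v C" "p \<in> C" "q \<in> C" "a \<in> val_ring v" "b \<in> val_ring v" "a + b = 1"
  shows "smul a p + smul b q \<in> C"
proof -
  let ?x = "\<lambda>i::nat. if i = 0 then p else q"
  let ?a = "\<lambda>i::nat. if i = 0 then a else b"
  have H: "\<And>(m::nat) x \<alpha>. (\<forall>i<m. x i \<in> C) \<Longrightarrow> (\<forall>i<m. \<alpha> i \<in> val_ring v) \<Longrightarrow> (\<Sum>i<m. \<alpha> i) = 1
     \<Longrightarrow> (\<Sum>i<m. smul (\<alpha> i) (x i)) \<in> C"
    using assms(1) unfolding val_convex_def by blast
  have "(\<Sum>i<Suc (Suc 0). smul (?a i) (?x i)) \<in> C"
    by (rule H) (use assms in \<open>auto simp: less_Suc_eq\<close>)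
  then show ?thesis by simp
qed

lemma convex3:
  assumes "val_convex v C" "p \<in> C" "q \<in> C" "u \<in> C" "a \<in> val_ring v" "b \<in> val_ring v"
    "e \<in> val_ring v" "a + b + e = 1"
  shows "smul a p + smul b q + smul e u \<in> C"
proof -
  let ?x = "\<lambda>i::nat. if i = 0 then p else if i = 1 then q else u"
  let ?a = "\<lambda>i::nat. if i = 0 then a else if i = 1 then b else e"
  have H: "\<And>(m::nat) x \<alpha>. (\<forall>i<m. x i \<in> C) \<Longrightarrow> (\<forall>i<m. \<alpha> i \<in> val_ring v) \<Longrightarrow> (\<Sum>i<m. \<alpha> i) = 1
     \<Longrightarrow> (\<Sum>i<m. smul (\<alpha> i) (x i)) \<in> C"
    using assms(1) unfolding val_convex_def by blast
  have "(\<Sum>i<Suc (Suc (Suc 0)). smul (?a i) (?x i)) \<in> C"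
    by (rule H) (use assms in \<open>auto simp: less_Suc_eq\<close>)
  then show ?thesis by (simp add: add.assoc)
qed

lemma convex_Omod:
  assumes val: "valuation v" and cv: "val_convex v C" and c: "c \<in> C"
  shows "Omod v ((\<lambda>x. x - c) ` C)"
  unfolding Omod_def
proof (intro conjI ballI)
  show "0 \<in> (\<lambda>x. x - c) ` C" using c by force
next
  fix x y assume "x \<in> (\<lambda>x. x - c) ` C" "y \<in> (\<lambda>x. x - c) ` C"
  then obtain p q where pq: "p \<in> C" "q \<in> C" "x = p - c" "y = q - c" by blast
  have "smul 1 p + smul 1 q + smul (-1) c \<in> C"
    by (rule convex3[OF cv pq(1,2) c O1[OF val] O1[OF val] Om1[OF val]]) simp
  moreover have "x + y = (smul 1 p + smul 1 q + smul (-1) c) - c"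
    using pq by (simp add: smul_m1)
  ultimately show "x + y \<in> (\<lambda>x. x - c) ` C" by blast
next
  fix a x assume a: "a \<in> val_ring v" and "x \<in> (\<lambda>x. x - c) ` C"
  then obtain p where p: "p \<in> C" "x = p - c" by blast
  have "smul a p + smul (1 - a) c \<in> C"
    by (rule convex2[OF cv p(1) c a Odiff[OF val O1[OF val] a]]) simp
  moreover have "smul a x = (smul a p + smul (1 - a) c) - c"
    unfolding p(2) by (simp add: vec_eq_iff algebra_simps)
  ultimately show "smul a x \<in> (\<lambda>x. x - c) ` C" by blast
qed

lemma KM_sum:
  fixes k :: nat
  assumes val: "valuation v" and M: "Omod v M" and x: "\<forall>i<k. x i \<in> M"
  shows "\<exists>a m. m \<in> M \<and> (\<Sum>i<k. smul (\<alpha> i) (x i)) = smul a m"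
  using x
proof (induction k)
  case 0
  then show ?case using Omod_0[OF M] by (intro exI[of _ 0] exI[of _ 0]) simp
next
  case (Suc k)
  then obtain a m where m: "m \<in> M" "(\<Sum>i<k. smul (\<alpha> i) (x i)) = smul a m" by auto
  obtain c w where "w \<in> M" "smul a m + smul (\<alpha> k) (x k) = smul c w"
    using two_term[OF val M m(1), of "x k" a "\<alpha> k"] Suc.prems by auto
  then show ?case using m by auto
qed

lemma aff_shift:
  fixes k :: nat
  assumes "(\<Sum>i<k. \<alpha> i) = (1::'k::field)"
  shows "(\<Sum>i<k. smul (\<alpha> i) (x i)) - c = (\<Sum>i<k. smul (\<alpha> i) (x i - (c::'k^'n)))"
proof -
  have "\<And>j. (\<Sum>i<k. \<alpha> i * c $ j) = c $ j" using assms by (simp add: sum_distrib_right[symmetric])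
  then show ?thesis
    by (simp add: vec_eq_iff sum_component algebra_simps sum_subtractf)
qed

lemma aff_KM:
  assumes val: "valuation v" and cv: "val_convex v C" and c: "c \<in> C" and y: "y \<in> aff C"
  shows "\<exists>a m. m \<in> (\<lambda>x. x - c) ` C \<and> y - c = smul a m"
proof -
  obtain k :: nat and x \<alpha> where k: "\<forall>i<k. x i \<in> C" "(\<Sum>i<k. \<alpha> i) = 1" "y = (\<Sum>i<k. smul (\<alpha> i) (x i))"
    using y unfolding aff_def by blast
  have "\<forall>i<k. x i - c \<in> (\<lambda>x. x - c) ` C" using k(1) by blast
  from KM_sum[OF val convex_Omod[OF val cv c] this, of \<alpha>] show ?thesis
    using aff_shift[OF k(2), of x c] k(3) by auto
qed

lemma C_aff: "C \<subseteq> aff C"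
proof
  fix x assume "x \<in> C"
  then show "x \<in> aff C" unfolding aff_def
    by (intro CollectI exI[of _ "Suc 0"] exI[of _ "\<lambda>_. x"] exI[of _ "\<lambda>_. 1"]) simp
qed


lemma ar2: "(rN::'g::linordered_ab_group_add) - a \<le> R \<Longrightarrow> R < U \<Longrightarrow> rN < a + U"
  by (metis add.commute add_less_cancel_right diff_add_cancel order.strict_trans1)

lemma sm_neg: "sm v r (- x) \<Longrightarrow> valuation v \<Longrightarrow> sm v r (x::'k::field^'n)"
proof -
  assume a: "sm v r (- x)" "valuation v"
  show ?thesis unfolding sm_def
  proof
    fix i
    have "- (x $ i) = 0 \<or> r < v (- (x $ i))" using a(1) unfolding sm_def by simp
    then show "x $ i = 0 \<or> r < v (x $ i)" using vneg[OF a(2), of "x $ i"] by simp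
  qed
qed

lemma open_at:
  fixes v :: "'k::field \<Rightarrow> 'g::linordered_ab_group_add" and C :: "('k^'n) set"
  assumes val: "valuation v" and cv: "val_convex v C" and c: "c \<in> C"
  shows "\<exists>r. vball v c r \<inter> aff C \<subseteq> C"
proof -
  let ?M = "(\<lambda>x. x - c) ` C"
  have Mm: "Omod v ?M" by (rule convex_Omod[OF val cv c])
  have fin: "finite (UNIV :: 'n set)" by simp
  have "\<exists>r. \<forall>a m. m \<in> ?M \<longrightarrow> sm v r (smul a m) \<longrightarrow> smul a m \<in> ?M"
    using keyP[OF val fin Mm] by simp
  then obtain r where r: "\<forall>a m. m \<in> ?M \<longrightarrow> sm v r (smul a m) \<longrightarrow> smul a m \<in> ?M"
    by (rule exE)
  have "vball v c r \<inter> aff C \<subseteq> C"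
  proof
    fix y assume y: "y \<in> vball v c r \<inter> aff C"
    then obtain a m where am: "m \<in> ?M" "y - c = smul a m" using aff_KM[OF val cv c] by blast
    have "sm v r (y - c)" using y vball_sm by blast
    then have "y - c \<in> ?M" using r am by simp
    then show "y \<in> C" by auto
  qed
  then show ?thesis by blast
qed


lemma closed_at:
  fixes v :: "'k::field \<Rightarrow> 'g::linordered_ab_group_add" and C :: "('k^'n) set"
  assumes val: "valuation v" and cv: "val_convex v C" and y: "y \<notin> C"
  shows "\<exists>R. vball v y R \<inter> C = {}"
proof (cases "C = {}")
  case True then show ?thesis by simp
next
  case Cne: False
  show ?thesis
  proof (cases "\<forall>a. a \<noteq> 0 \<longrightarrow> 0 \<le> v a")
    case True
    have "vball v y 0 \<subseteq> {y}"
    proof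
      fix x assume x: "x \<in> vball v y 0"
      have "\<forall>i. x $ i - y $ i = 0"
      proof
        fix i
        show "x $ i - y $ i = 0"
        proof (rule ccontr)
          let ?z = "x $ i - y $ i"
          assume nz: "?z \<noteq> 0"
          then have "0 < v ?z" using x unfolding vball_def by blast
          moreover have "0 \<le> v (inverse ?z)" using True nz by simp
          ultimately show False using vinv[OF val nz] by simp
        qed
      qed
      then show "x \<in> {y}" by (simp add: vec_eq_iff)
    qed
    then show ?thesis using y by blast
  next
    case False
    then obtain a0 where a0: "a0 \<noteq> 0" "v a0 < 0" by (auto simp: not_le)
    obtain c where c: "c \<in> C" using Cne by blast
    let ?M = "(\<lambda>x. x - c) ` C"
    have fin: "finite (UNIV :: 'n set)" by simp
    have Mm: "Omod v ?M" by (rule convex_Omod[OF val cv c])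
    define w where "w = y - c"
    have wM: "w \<notin> ?M" using y unfolding w_def by auto
    define N where "N = {m + smul b w | m b. m \<in> ?M \<and> b \<in> val_ring v}"
    have Nm: "Omod v N" unfolding Omod_def
    proof (intro conjI ballI)
      show "0 \<in> N" unfolding N_def using Omod_0[OF Mm] O0[of v]
        by (intro CollectI exI[of _ 0] exI[of _ "0::'k"]) simp
    next
      fix x z assume "x \<in> N" "z \<in> N"
      then obtain m1 b1 m2 b2 where "x = m1 + smul b1 w" "z = m2 + smul b2 w" "m1 \<in> ?M" "m2 \<in> ?M"
        "b1 \<in> val_ring v" "b2 \<in> val_ring v" unfolding N_def by blast
      moreover have "x + z = (m1 + m2) + smul (b1 + b2) w"
        using calculation by (simp add: smul_addl algebra_simps)
      ultimately show "x + z \<in> N" unfolding N_def using Omod_add[OF Mm] Oadd[OF val] by blast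
    next
      fix a x assume a: "a \<in> val_ring v" and "x \<in> N"
      then obtain m1 b1 where "x = m1 + smul b1 w" "m1 \<in> ?M" "b1 \<in> val_ring v" unfolding N_def by blast
      moreover have "smul a x = smul a m1 + smul (a * b1) w"
        using calculation by (simp add: smul_addr smul_assoc)
      ultimately show "smul a x \<in> N" unfolding N_def using Omod_smul[OF Mm a] Omult[OF val a] by blast
    qed
    have "\<exists>r. \<forall>a m. m \<in> ?M \<longrightarrow> sm v r (smul a m) \<longrightarrow> smul a m \<in> ?M"
      using keyP[OF val fin Mm] by simp
    then obtain rM where rM: "\<forall>a m. m \<in> ?M \<longrightarrow> sm v rM (smul a m) \<longrightarrow> smul a m \<in> ?M"
      by (rule exE)
    have "\<exists>r. \<forall>a m. m \<in> N \<longrightarrow> sm v r (smul a m) \<longrightarrow> smul a m \<in> N"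
      using keyP[OF val fin Nm] by simp
    then obtain rN where rN: "\<forall>a m. m \<in> N \<longrightarrow> sm v rN (smul a m) \<longrightarrow> smul a m \<in> N"
      by (rule exE)
    define R where "R = max rM (rN - v a0)"
    have RM: "rM \<le> R" and RN: "rN - v a0 \<le> R" unfolding R_def by auto
    have "vball v y R \<inter> C = {}"
    proof (rule ccontr)
      assume "vball v y R \<inter> C \<noteq> {}"
      then obtain x where x: "x \<in> vball v y R" "x \<in> C" by blast
      define u where "u = x - y"
      have smu: "sm v R u" using x(1) vball_sm unfolding u_def by blast
      define m where "m = x - c"
      have mM: "m \<in> ?M" using x(2) unfolding m_def by blast
      have uN: "u \<in> N" unfolding N_def using mM Om1[OF val]
        by (intro CollectI exI[of _ m] exI[of _ "-1::'k"]) (simp add: u_def m_def w_def smul_m1)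
      have "sm v rN (smul a0 u)" unfolding sm_def
      proof
        fix i
        show "smul a0 u $ i = 0 \<or> rN < v (smul a0 u $ i)"
        proof (cases "u $ i = 0")
          case False
          then have "R < v (u $ i)" using smu unfolding sm_def by blast
          then have "rN < v a0 + v (u $ i)" using ar2[OF RN] by blast
          then show ?thesis using vmult[OF val a0(1) False] by simp
        qed simp
      qed
      then have "smul a0 u \<in> N" using rN uN by blast
      then obtain m' b where m': "m' \<in> ?M" "b \<in> val_ring v" "smul a0 u = m' + smul b w"
        unfolding N_def by blast
      have eq: "smul (a0 + b) w = smul a0 m - m'"
        using m'(3) unfolding u_def m_def w_def by (simp add: vec_eq_iff algebra_simps)
      show False
      proof (cases "a0 + b = 0")
        case True
        then have "b = - a0" by (simp add: eq_neg_iff_add_eq_0 add.commute)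
        then have "v b < 0" using vneg[OF val] a0 by simp
        then show False using m'(2) a0(1) \<open>b = - a0\<close> unfolding val_ring_def by auto
      next
        case False
        obtain c1 m1 where c1: "m1 \<in> ?M" "smul a0 m + smul (-1) m' = smul c1 m1"
          using two_term[OF val Mm mM m'(1)] by blast
        have "w = smul (inverse (a0 + b)) (smul (a0 + b) w)"
          using False by (simp add: smul_assoc)
        also have "\<dots> = smul (inverse (a0 + b) * c1) m1"
        proof -
          have "smul a0 m - m' = smul c1 m1" using c1(2) by (simp add: smul_m1)
          then show ?thesis unfolding eq by (simp add: smul_assoc)
        qed
        finally have w1: "w = smul (inverse (a0 + b) * c1) m1" .
        obtain c2 m2 where c2: "m2 \<in> ?M" "smul (inverse (a0 + b) * c1) m1 + smul (-1) m = smul c2 m2"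
          using two_term[OF val Mm c1(1) mM] by blast
        have wm: "w - m = smul c2 m2" using c2(2) w1 by (simp add: smul_m1)
        have "w - m = - u" unfolding w_def m_def u_def by simp
        then have "sm v R (- (w - m))" using smu by simp
        then have "sm v rM (w - m)" using sm_neg[OF _ val] sm_mono[OF _ RM] by blast
        then have "w - m \<in> ?M" using rM c2(1) wm by simp
        then have "(w - m) + m \<in> ?M" using Omod_add[OF Mm _ mM] by blast
        then show False using wM by simp
      qed
    qed
    then show ?thesis by blast
  qed
qed

theorem proposition2p15:
  fixes v :: "'k::field \<Rightarrow> 'g::linordered_ab_group_add"
    and C :: "('k^'n) set"
  assumes "valuation v"
    and "val_convex v C"
  shows "openin (subtopology (val_topology v) (aff C)) C \<and> closedin (val_topology v) C"
proof
  have "\<forall>c\<in>C. \<exists>r. vball v c r \<inter> aff C \<subseteq> C" using open_at[OF assms] by blast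
  from bchoice[OF this] obtain r where r: "\<forall>c\<in>C. vball v c (r c) \<inter> aff C \<subseteq> C" by (rule exE)
  define U where "U = (\<Union>c\<in>C. vball v c (r c))"
  have "openin (val_topology v) U" unfolding U_def
    by (intro openin_Union) (auto intro: vball_open[OF assms(1)])
  moreover have "C = U \<inter> aff C"
  proof
    show "C \<subseteq> U \<inter> aff C" using C_aff[of C] vball_center[of _ v] unfolding U_def by blast
    show "U \<inter> aff C \<subseteq> C"
    proof
      fix x assume "x \<in> U \<inter> aff C"
      then obtain c where "c \<in> C" "x \<in> vball v c (r c)" "x \<in> aff C" unfolding U_def by blast
      then show "x \<in> C" using r by blast
    qed
  qed
  ultimately show "openin (subtopology (val_topology v) (aff C)) C"
    unfolding openin_subtopology by blast
next
  have "openin (val_topology v) (UNIV - C)" unfolding openin_val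
  proof
    fix y assume "y \<in> UNIV - C"
    then obtain R where "vball v y R \<inter> C = {}" using closed_at[OF assms] by blast
    then show "\<exists>r. vball v y r \<subseteq> UNIV - C" by blast
  qed
  then show "closedin (val_topology v) C" unfolding closedin_def topspace_val by simp
qed

end
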